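(* Let $q$ be a prime power, $n\ge 0$, and $L_q^n$ the lattice of all subspaces of $\mathbb{F}_q^n$ ordered by inclusion and ranked by dimension. Then $$\mathcal{M}(L_q^n,t)=\sum_{0\le i\le j\le k\le n}(-1)^{k-i}\begin{bmatrix}n\\ i,\,j-i,\,k-j,\,n-k\end{bmatrix}_q q^{\binom{j-i}{2}+\binom{k-j}{2}}\,t^{3n-i-j-k}.$$
   Context: $\begin{bmatrix}n\\k\end{bmatrix}_q=\dfrac{(q^n-1)\cdots(q-1)}{(q^k-1)\cdots(q-1)\cdot(q^{n-k}-1)\cdots(q-1)}$ and $\begin{bmatrix}n\\k_1,\dots,k_m\end{bmatrix}_q=\begin{bmatrix}n\\k_1\end{bmatrix}_q\begin{bmatrix}n-k_1\\k_2\end{bmatrix}_q\cdots\begin{bmatrix}n-(k_1+\cdots+k_{m-1})\\k_m\end{bmatrix}_q$. For a finite ranked poset $\mathcal{P}$, $\rho(x,y,z)=3\,\mathrm{rk}(\mathcal{P})-\mathrm{rk}(x)-\mathrm{rk}(y)-\mathrm{rk}(z)$, $\delta_3(x,y,z)=1$ if $x=y=z$ and $0$ otherwise, $J$ is the unique integer-valued function on triples $x\le y\le z$ with $\sum_{x\le a\le y\le b\le z}J(a,y,b)=\delta_3(x,y,z)$ for all $x\le y\le z$, and $\mathcal{M}(\mathcal{P},t)=\sum_{x\le y\le z}J(x,y,z)\,t^{\rho(x,y,z)}$. *)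

theory Defs
  imports "HOL-Computational_Algebra.Polynomial" "HOL-Library.Function_Algebras"
begin

definition poset_rank :: "'b set \<Rightarrow> ('b \<Rightarrow> nat) \<Rightarrow> nat" where
  "poset_rank P rk = Max (rk ` P)"

definition rho :: "'b set \<Rightarrow> ('b \<Rightarrow> nat) \<Rightarrow> 'b \<Rightarrow> 'b \<Rightarrow> 'b \<Rightarrow> nat" where
  "rho P rk x y z = 3 * poset_rank P rk - rk x - rk y - rk z"

definition delta3 :: "'b \<Rightarrow> 'b \<Rightarrow> 'b \<Rightarrow> int" where
  "delta3 x y z = (if x = y \<and> y = z then 1 else 0)"

definition chains3 :: "'b set \<Rightarrow> ('b \<Rightarrow> 'b \<Rightarrow> bool) \<Rightarrow> ('b \<times> 'b \<times> 'b) set" where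
  "chains3 P le = {(x, y, z). x \<in> P \<and> y \<in> P \<and> z \<in> P \<and> le x y \<and> le y z}"

text \<open>J is the unique integer-valued function on triples x \<le> y \<le> z with
  sum over x \<le> a \<le> y \<le> b \<le> z of J(a,y,b) equal to delta3(x,y,z).
  (Values off the chains are normalised to 0 so that THE is well defined.)\<close>

definition is_J :: "'b set \<Rightarrow> ('b \<Rightarrow> 'b \<Rightarrow> bool) \<Rightarrow> ('b \<Rightarrow> 'b \<Rightarrow> 'b \<Rightarrow> int) \<Rightarrow> bool" where
  "is_J P le f \<longleftrightarrow>
     (\<forall>x y z. (x, y, z) \<notin> chains3 P le \<longrightarrow> f x y z = 0) \<and>
     (\<forall>x y z. (x, y, z) \<in> chains3 P le \<longrightarrow>
        (\<Sum>(a, b) \<in> {(a, b). a \<in> P \<and> b \<in> P \<and> le x a \<and> le a y \<and> le y b \<and> le b z}.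
            f a y b) = delta3 x y z)"

definition Jfun :: "'b set \<Rightarrow> ('b \<Rightarrow> 'b \<Rightarrow> bool) \<Rightarrow> 'b \<Rightarrow> 'b \<Rightarrow> 'b \<Rightarrow> int" where
  "Jfun P le = (THE f. is_J P le f)"

definition Mpoly :: "'b set \<Rightarrow> ('b \<Rightarrow> 'b \<Rightarrow> bool) \<Rightarrow> ('b \<Rightarrow> nat) \<Rightarrow> rat poly" where
  "Mpoly P le rk = (\<Sum>(x, y, z) \<in> chains3 P le.
       monom (of_int (Jfun P le x y z)) (rho P rk x y z))"

definition qbinom :: "nat \<Rightarrow> nat \<Rightarrow> nat \<Rightarrow> rat" where
  "qbinom q n k =
     (\<Prod>m = 1..n. of_nat q ^ m - 1) /
     ((\<Prod>m = 1..k. of_nat q ^ m - 1) * (\<Prod>m = 1..n - k. of_nat q ^ m - 1))"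

fun qmultinom :: "nat \<Rightarrow> nat \<Rightarrow> nat list \<Rightarrow> rat" where
  "qmultinom q n [] = 1"
| "qmultinom q n (k # ks) = qbinom q n k * qmultinom q (n - k) ks"

text \<open>F_q^n is represented as functions nat \<Rightarrow> 'a vanishing outside {0..<n}.\<close>

definition vscale :: "'a::field \<Rightarrow> (nat \<Rightarrow> 'a) \<Rightarrow> (nat \<Rightarrow> 'a)" where
  "vscale c v = (\<lambda>i. c * v i)"

definition Fn :: "nat \<Rightarrow> (nat \<Rightarrow> 'a::field) set" where
  "Fn n = {v. \<forall>i\<ge>n. v i = 0}"

definition subspace_lattice :: "nat \<Rightarrow> (nat \<Rightarrow> 'a::field) set set" where
  "subspace_lattice n = {W. W \<subseteq> Fn n \<and> module.subspace vscale W}"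

definition sdim :: "(nat \<Rightarrow> 'a::field) set \<Rightarrow> nat" where
  "sdim W = vector_space.dim vscale W"

end

theory Submission
  imports Defs "HOL-Library.FuncSet"
begin


interpretation VS: vector_space "vscale :: 'a::field \<Rightarrow> (nat \<Rightarrow> 'a) \<Rightarrow> (nat \<Rightarrow> 'a)"
  by unfold_locales (auto simp: vscale_def fun_eq_iff algebra_simps)

lemma subspace_Fn: "VS.subspace (Fn n :: (nat \<Rightarrow> 'a::field) set)"
  unfolding VS.subspace_def Fn_def by (auto simp: vscale_def)

lemma finite_Fn: "finite (Fn n :: (nat \<Rightarrow> 'a::{finite,field}) set)"
proof -
  have "Fn n \<subseteq> (\<lambda>f i. if i < n then f i else 0) ` (PiE {..<n} (\<lambda>_. (UNIV::'a set)))"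
  proof
    fix v :: "nat \<Rightarrow> 'a" assume "v \<in> Fn n"
    hence "v = (\<lambda>i. if i < n then (restrict v {..<n}) i else 0)"
      by (auto simp: Fn_def fun_eq_iff restrict_apply)
    moreover have "restrict v {..<n} \<in> PiE {..<n} (\<lambda>_. UNIV)" by simp
    ultimately show "v \<in> (\<lambda>f i. if i < n then f i else 0) ` (PiE {..<n} (\<lambda>_. UNIV))" by (rule image_eqI)
  qed
  thus ?thesis by (rule finite_subset) (intro finite_imageI finite_PiE; simp)
qed

lemma card_Fn: "card (Fn n :: (nat \<Rightarrow> 'a::{finite,field}) set) = card (UNIV::'a set) ^ n"
proof -
  have "bij_betw (\<lambda>v. restrict v {..<n}) (Fn n :: (nat \<Rightarrow> 'a) set) (PiE {..<n} (\<lambda>_. UNIV))"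
  proof (rule bij_betwI')
    fix x y :: "nat \<Rightarrow> 'a" assume "x \<in> Fn n" "y \<in> Fn n"
    show "(restrict x {..<n} = restrict y {..<n}) = (x = y)"
    proof
      assume r: "restrict x {..<n} = restrict y {..<n}"
      show "x = y"
      proof
        fix i show "x i = y i"
        proof (cases "i < n")
          case True thus ?thesis using fun_cong[OF r, of i] by simp
        next
          case False thus ?thesis using \<open>x \<in> Fn n\<close> \<open>y \<in> Fn n\<close> by (simp add: Fn_def)
        qed
      qed
    qed simp
  next
    fix x :: "nat \<Rightarrow> 'a" assume "x \<in> Fn n" thus "restrict x {..<n} \<in> PiE {..<n} (\<lambda>_. UNIV)" by auto
  next
    fix f :: "nat \<Rightarrow> 'a" assume "f \<in> PiE {..<n} (\<lambda>_. UNIV)"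
    hence "f = restrict (\<lambda>i. if i < n then f i else 0) {..<n}" 
      using PiE_arb[OF \<open>f \<in> PiE {..<n} (\<lambda>_. UNIV)\<close>] by (auto simp: fun_eq_iff)
    moreover have "(\<lambda>i. if i < n then f i else 0) \<in> Fn n" by (auto simp: Fn_def)
    ultimately show "\<exists>x\<in>Fn n. f = restrict x {..<n}" by blast
  qed
  hence "card (Fn n :: (nat \<Rightarrow> 'a) set) = card (PiE {..<n} (\<lambda>_. (UNIV::'a set)))"
    by (rule bij_betw_same_card)
  also have "\<dots> = card (UNIV::'a set) ^ n" by (simp add: card_PiE)
  finally show ?thesis .
qed

lemma span_sub_Fn: "S \<subseteq> Fn n \<Longrightarrow> VS.span S \<subseteq> Fn n"
  by (rule VS.span_minimal[OF _ subspace_Fn])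

lemma card_span_insert:
  fixes S :: "(nat \<Rightarrow> 'a::{finite,field}) set"
  assumes fin: "finite (VS.span S)" and v: "v \<notin> VS.span S"
  shows "card (VS.span (insert v S)) = card (UNIV::'a set) * card (VS.span S)"
proof -
  have eq: "VS.span (insert v S) = (\<lambda>(c,w). vscale c v + w) ` (UNIV \<times> VS.span S)"
  proof (rule set_eqI)
    fix x
    show "x \<in> VS.span (insert v S) \<longleftrightarrow> x \<in> (\<lambda>(c,w). vscale c v + w) ` (UNIV \<times> VS.span S)"
      unfolding VS.span_insert
    proof safe
      fix k assume "x - vscale k v \<in> VS.span S"
      thus "x \<in> (\<lambda>(c,w). vscale c v + w) ` (UNIV \<times> VS.span S)"
        by (intro image_eqI[of _ _ "(k, x - vscale k v)"]) auto
    next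
      fix c w assume "w \<in> VS.span S"
      thus "\<exists>k. vscale c v + w - vscale k v \<in> VS.span S" by (intro exI[of _ c]) simp
    qed
  qed
  have inj: "inj_on (\<lambda>(c,w). vscale c v + w) (UNIV \<times> VS.span S)"
  proof (rule inj_onI, clarsimp)
    fix c w c' w' assume w: "w \<in> VS.span S" and w': "w' \<in> VS.span S"
      and e: "vscale c v + w = vscale c' v + w'"
    show "c = c' \<and> w = w'"
    proof (cases "c = c'")
      case True thus ?thesis using e by simp
    next
      case False
      have "vscale (c - c') v = w' - w" using e
        by (simp add: vscale_def fun_eq_iff algebra_simps)
      hence "vscale (inverse (c - c')) (vscale (c - c') v) \<in> VS.span S"
        using w w' by (simp add: VS.span_scale VS.span_diff)
      moreover have "(\<lambda>i. inverse (c - c') * ((c - c') * v i)) = v" using False by (auto simp: fun_eq_iff)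
      ultimately have "v \<in> VS.span S" by (simp add: vscale_def)
      thus ?thesis using v by simp
    qed
  qed
  show ?thesis unfolding eq card_image[OF inj] card_cartesian_product by simp
qed



lemma card_field_ge2: "2 \<le> card (UNIV :: 'a::{finite,field} set)"
proof -
  have "card {0::'a, 1} \<le> card (UNIV :: 'a set)" by (rule card_mono) auto
  thus ?thesis by simp
qed

lemma card_span_indep:
  fixes B :: "(nat \<Rightarrow> 'a::{finite,field}) set"
  assumes "finite B" "VS.independent B" "B \<subseteq> Fn n"
  shows "card (VS.span B) = card (UNIV::'a set) ^ card B"
  using assms
proof (induction B rule: finite_induct)
  case empty thus ?case by simp
next
  case (insert v B)
  have ind: "VS.independent B" and v: "v \<notin> VS.span B"
    using insert.prems(1) insert.hyps(2) by (auto simp: VS.independent_insert)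
  have fin: "finite (VS.span B)"
    using insert.prems(2) by (intro finite_subset[OF span_sub_Fn finite_Fn[where 'a='a and n=n]]) simp
  show ?case using card_span_insert[OF fin v] insert.IH[OF ind] insert.prems(2) insert.hyps
    by simp
qed

lemma card_subspace:
  assumes W: "W \<in> (subspace_lattice n :: (nat \<Rightarrow> 'a::{finite,field}) set set)"
  shows "card W = card (UNIV::'a set) ^ sdim W"
proof -
  from W have WF: "W \<subseteq> Fn n" and sW: "VS.subspace W" by (auto simp: subspace_lattice_def)
  obtain B where B: "B \<subseteq> W" "VS.independent B" "W \<subseteq> VS.span B" "card B = VS.dim W"
    by (rule VS.basis_exists)
  have "VS.span B = W" using VS.span_subspace[OF B(1) B(3) sW] .
  moreover have "finite B" by (rule finite_subset[OF _ finite_Fn[where 'a='a and n=n]]) (use B(1) WF in blast)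
  moreover have "B \<subseteq> Fn n" using B(1) WF by blast
  ultimately have "card W = card (UNIV::'a set) ^ card B" using card_span_indep[of B n] B(2) by metis
  thus ?thesis using B(4) by (simp only: sdim_def)
qed

fun good :: "(nat \<Rightarrow> 'a::field) set \<Rightarrow> (nat \<Rightarrow> 'a) set \<Rightarrow> (nat \<Rightarrow> 'a) list \<Rightarrow> bool" where
  "good x y [] = True"
| "good x y (v # vs) = (good x y vs \<and> v \<in> y \<and> v \<notin> VS.span (x \<union> set vs))"

lemma good_set: "good x y vs \<Longrightarrow> set vs \<subseteq> y"
  by (induction vs) auto

lemma good_mono: "good x a vs \<Longrightarrow> a \<subseteq> b \<Longrightarrow> good x b vs"
  by (induction vs) auto

lemma good_span: "good x y vs \<Longrightarrow> good x (VS.span (x \<union> set vs)) vs"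
proof (induction vs)
  case Nil thus ?case by simp
next
  case (Cons v vs)
  hence g: "good x (VS.span (x \<union> set vs)) vs" by simp
  have "VS.span (x \<union> set vs) \<subseteq> VS.span (x \<union> set (v # vs))" by (rule VS.span_mono) auto
  hence "good x (VS.span (x \<union> set (v # vs))) vs" using good_mono[OF g] by blast
  moreover have "v \<in> VS.span (x \<union> set (v # vs))" by (rule VS.span_base) simp
  ultimately show ?case using Cons.prems by simp
qed

lemma good_card:
  assumes x: "x \<in> (subspace_lattice n :: (nat \<Rightarrow> 'a::{finite,field}) set set)"
    and y: "y \<subseteq> Fn n"
  shows "good x y vs \<Longrightarrow> card (VS.span (x \<union> set vs)) = card x * card (UNIV::'a set) ^ length vs"
proof (induction vs)
  case Nil
  have "VS.subspace x" using x by (simp add: subspace_lattice_def)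
  hence "VS.span x = x" by (rule VS.span_eq_iff[THEN iffD2])
  thus ?case by (simp del: VS.span_eq_iff)
next
  case (Cons v vs)
  have g: "good x y vs" and v: "v \<notin> VS.span (x \<union> set vs)" using Cons.prems by auto
  have "x \<union> set vs \<subseteq> Fn n" using x y good_set[OF g] by (auto simp: subspace_lattice_def)
  hence fin: "finite (VS.span (x \<union> set vs))" 
    by (intro finite_subset[OF span_sub_Fn finite_Fn[where 'a='a and n=n]])
  have "VS.span (x \<union> set (v # vs)) = VS.span (insert v (x \<union> set vs))" by simp
  thus ?case using card_span_insert[OF fin v] Cons.IH[OF g] by simp
qed

definition Lset :: "(nat \<Rightarrow> 'a::field) set \<Rightarrow> (nat \<Rightarrow> 'a) set \<Rightarrow> nat \<Rightarrow> (nat \<Rightarrow> 'a) list set" where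
  "Lset x y r = {vs. length vs = r \<and> good x y vs}"

lemma finite_Lset: "finite y \<Longrightarrow> finite (Lset x y r)"
  unfolding Lset_def
  by (rule finite_subset[OF _ finite_lists_length_eq[of y r]]) (auto dest: good_set)

lemma card_Lset:
  fixes x y :: "(nat \<Rightarrow> 'a::{finite,field}) set"
  assumes x: "x \<in> subspace_lattice n" and y: "y \<in> subspace_lattice n" and xy: "x \<subseteq> y"
  shows "card (Lset x y r) = (\<Prod>i<r. card y - card x * card (UNIV::'a set) ^ i)"
proof (induction r)
  case 0
  have "Lset x y 0 = {[]}" by (auto simp: Lset_def)
  thus ?case by simp
next
  case (Suc r)
  have yF: "y \<subseteq> Fn n" and sy: "VS.subspace y" using y by (auto simp: subspace_lattice_def)
  have finy: "finite y" by (rule finite_subset[OF yF finite_Fn])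
  have eq: "Lset x y (Suc r) = (\<lambda>(vs,v). v # vs) ` (SIGMA vs:Lset x y r. y - VS.span (x \<union> set vs))"
  proof (rule set_eqI)
    fix ws
    show "ws \<in> Lset x y (Suc r) \<longleftrightarrow> ws \<in> (\<lambda>(vs,v). v # vs) ` (SIGMA vs:Lset x y r. y - VS.span (x \<union> set vs))"
    proof
      assume "ws \<in> Lset x y (Suc r)"
      then obtain v vs where "ws = v # vs" "length vs = r" "good x y (v # vs)"
        by (auto simp: Lset_def length_Suc_conv)
      thus "ws \<in> (\<lambda>(vs,v). v # vs) ` (SIGMA vs:Lset x y r. y - VS.span (x \<union> set vs))"
        by (intro image_eqI[of _ _ "(vs, v)"]) (auto simp: Lset_def)
    qed (auto simp: Lset_def)
  qed
  have inj: "inj_on (\<lambda>(vs,v). v # vs) (SIGMA vs:Lset x y r. y - VS.span (x \<union> set vs))"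
    by (rule inj_onI) auto
  have sub: "\<And>vs. vs \<in> Lset x y r \<Longrightarrow> VS.span (x \<union> set vs) \<subseteq> y"
  proof -
    fix vs assume "vs \<in> Lset x y r"
    hence "set vs \<subseteq> y" using good_set by (auto simp: Lset_def)
    hence "x \<union> set vs \<subseteq> y" using xy by blast
    thus "VS.span (x \<union> set vs) \<subseteq> y" using sy by (rule VS.span_minimal)
  qed
  have cs: "\<And>vs. vs \<in> Lset x y r \<Longrightarrow> card (y - VS.span (x \<union> set vs)) = card y - card x * card (UNIV::'a set) ^ r"
  proof -
    fix vs assume vs: "vs \<in> Lset x y r"
    have "card (y - VS.span (x \<union> set vs)) = card y - card (VS.span (x \<union> set vs))"
      using sub[OF vs] finy by (simp add: card_Diff_subset finite_subset)
    also have "card (VS.span (x \<union> set vs)) = card x * card (UNIV::'a set) ^ r"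
      using good_card[OF x yF] vs by (auto simp: Lset_def)
    finally show "card (y - VS.span (x \<union> set vs)) = card y - card x * card (UNIV::'a set) ^ r" .
  qed
  have "card (Lset x y (Suc r)) = (\<Sum>vs\<in>Lset x y r. card (y - VS.span (x \<union> set vs)))"
    unfolding eq card_image[OF inj]
    by (rule card_SigmaI) (use finite_Lset[OF finy] finy in simp_all)
  also have "\<dots> = card (Lset x y r) * (card y - card x * card (UNIV::'a set) ^ r)"
    using cs by simp
  also have "\<dots> = (\<Prod>i<r. card y - card x * card (UNIV::'a set) ^ i) * (card y - card x * card (UNIV::'a set) ^ r)"
    by (simp only: Suc.IH)
  also have "\<dots> = (\<Prod>i<Suc r. card y - card x * card (UNIV::'a set) ^ i)"
    by (simp only: prod.lessThan_Suc)
  finally show ?case .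
qed



lemma L_fin: "a \<in> (subspace_lattice n :: (nat \<Rightarrow> 'a::{finite,field}) set set) \<Longrightarrow> finite a"
  unfolding subspace_lattice_def by (auto intro: finite_subset[OF _ finite_Fn])

lemma good_span_eq:
  fixes x a :: "(nat \<Rightarrow> 'a::{finite,field}) set"
  assumes x: "x \<in> subspace_lattice n" and a: "a \<in> subspace_lattice n" and xa: "x \<subseteq> a"
    and g: "good x a vs" and c: "card a = card x * card (UNIV::'a set) ^ length vs"
  shows "VS.span (x \<union> set vs) = a"
proof -
  have aF: "a \<subseteq> Fn n" and sa: "VS.subspace a" using a by (auto simp: subspace_lattice_def)
  have "x \<union> set vs \<subseteq> a" using xa good_set[OF g] by (simp only: Un_subset_iff) 
  hence sub: "VS.span (x \<union> set vs) \<subseteq> a" using sa by (rule VS.span_minimal)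
  have "card (VS.span (x \<union> set vs)) = card a" using good_card[OF x aF g] c by simp
  thus ?thesis using card_subset_eq[OF L_fin[OF a] sub] by simp
qed

lemma card_Aset:
  fixes x y :: "(nat \<Rightarrow> 'a::{finite,field}) set"
  assumes x: "x \<in> subspace_lattice n" and y: "y \<in> subspace_lattice n" and xy: "x \<subseteq> y"
  shows "card {a \<in> subspace_lattice n. x \<subseteq> a \<and> a \<subseteq> y \<and> card a = card x * card (UNIV::'a set) ^ r}
     * (\<Prod>i<r. card x * card (UNIV::'a set) ^ r - card x * card (UNIV::'a set) ^ i)
   = (\<Prod>i<r. card y - card x * card (UNIV::'a set) ^ i)"
proof -
  define Q where "Q = card (UNIV::'a set)"
  define A where "A = {a \<in> subspace_lattice n. x \<subseteq> a \<and> a \<subseteq> y \<and> card a = card x * Q ^ r}"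
  have yF: "y \<subseteq> Fn n" and sy: "VS.subspace y" using y by (auto simp: subspace_lattice_def)
  have eq: "Lset x y r = (\<Union>a\<in>A. Lset x a r)"
  proof (rule set_eqI, rule iffI)
    fix vs assume vs: "vs \<in> Lset x y r"
    hence g: "good x y vs" and len: "length vs = r" by (auto simp: Lset_def)
    let ?a = "VS.span (x \<union> set vs)"
    have sxv: "x \<union> set vs \<subseteq> y" using xy good_set[OF g] by (simp only: Un_subset_iff)
    have "?a \<subseteq> y" using sxv sy by (rule VS.span_minimal)
    moreover have "?a \<subseteq> Fn n" using sxv yF by (intro span_sub_Fn) (rule order.trans)
    moreover have "x \<subseteq> ?a" using VS.span_superset[of "x \<union> set vs"] by blast
    moreover have "card ?a = card x * Q ^ r" using good_card[OF x yF g] len by (simp add: Q_def)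
    ultimately have "?a \<in> A" by (simp add: A_def subspace_lattice_def)
    moreover have "vs \<in> Lset x ?a r" using good_span[OF g] len by (simp add: Lset_def)
    ultimately show "vs \<in> (\<Union>a\<in>A. Lset x a r)" by blast
  next
    fix vs assume "vs \<in> (\<Union>a\<in>A. Lset x a r)"
    then obtain a where "a \<in> A" "vs \<in> Lset x a r" by blast
    thus "vs \<in> Lset x y r" using good_mono[of x a vs y] by (auto simp: A_def Lset_def)
  qed
  have finA: "finite A"
    by (rule finite_subset[of _ "Pow y"]) (use L_fin[OF y] in \<open>auto simp: A_def\<close>)
  have disj: "\<forall>a\<in>A. \<forall>b\<in>A. a \<noteq> b \<longrightarrow> Lset x a r \<inter> Lset x b r = {}"
  proof (intro ballI impI)
    fix a b assume a: "a \<in> A" and b: "b \<in> A" and ab: "a \<noteq> b"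
    show "Lset x a r \<inter> Lset x b r = {}"
    proof (rule ccontr)
      assume "Lset x a r \<inter> Lset x b r \<noteq> {}"
      then obtain vs where va: "vs \<in> Lset x a r" and vb: "vs \<in> Lset x b r" by blast
      have "VS.span (x \<union> set vs) = a"
        using a va by (intro good_span_eq[OF x]) (auto simp: Lset_def A_def Q_def)
      moreover have "VS.span (x \<union> set vs) = b"
        using b vb by (intro good_span_eq[OF x]) (auto simp: Lset_def A_def Q_def)
      ultimately
      show False using ab by simp
    qed
  qed
  have "card (Lset x y r) = (\<Sum>a\<in>A. card (Lset x a r))"
    unfolding eq by (rule card_UN_disjoint[OF finA _ disj]) (use L_fin in \<open>auto simp: A_def intro: finite_Lset\<close>)
  also have "\<dots> = (\<Sum>a\<in>A. (\<Prod>i<r. card x * Q ^ r - card x * Q ^ i))"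
  proof (rule sum.cong[OF refl])
    fix a assume a: "a \<in> A"
    hence "card (Lset x a r) = (\<Prod>i<r. card a - card x * Q ^ i)"
      using card_Lset[OF x, of a] by (auto simp: A_def Q_def)
    thus "card (Lset x a r) = (\<Prod>i<r. card x * Q ^ r - card x * Q ^ i)" using a by (simp add: A_def)
  qed
  also have "\<dots> = card A * (\<Prod>i<r. card x * Q ^ r - card x * Q ^ i)" by simp
  finally show ?thesis using card_Lset[OF x y xy, of r] by (simp add: A_def Q_def)
qed



definition PP :: "nat \<Rightarrow> nat \<Rightarrow> nat \<Rightarrow> nat" where
  "PP Q M r = (\<Prod>i<r. Q ^ M - Q ^ i)"

lemma prod_factor: "(\<Prod>i<r. (c::nat) * Q ^ M - c * Q ^ i) = c ^ r * PP Q M r"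
proof -
  have "(\<Prod>i<r. c * Q ^ M - c * Q ^ i) = (\<Prod>i<r. c * (Q ^ M - Q ^ i))"
    by (simp add: diff_mult_distrib2)
  also have "\<dots> = c ^ r * PP Q M r" by (simp add: prod.distrib PP_def)
  finally show ?thesis .
qed

lemma sdim_mono:
  fixes x y :: "(nat \<Rightarrow> 'a::{finite,field}) set"
  assumes x: "x \<in> subspace_lattice n" and y: "y \<in> subspace_lattice n" and xy: "x \<subseteq> y"
  shows "sdim x \<le> sdim y"
proof -
  have "card x \<le> card y" by (rule card_mono[OF L_fin[OF y] xy])
  hence "card (UNIV::'a set) ^ sdim x \<le> card (UNIV::'a set) ^ sdim y"
    using card_subspace[OF x] card_subspace[OF y] by simp
  moreover have "1 < card (UNIV::'a set)" using card_field_ge2[where 'a='a] by simp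
  ultimately show ?thesis using power_le_imp_le_exp by blast
qed

lemma count_interval:
  fixes x y :: "(nat \<Rightarrow> 'a::{finite,field}) set"
  assumes x: "x \<in> subspace_lattice n" and y: "y \<in> subspace_lattice n" and xy: "x \<subseteq> y"
  shows "card {a \<in> subspace_lattice n. x \<subseteq> a \<and> a \<subseteq> y \<and> sdim a = sdim x + r}
     * PP (card (UNIV::'a set)) r r = PP (card (UNIV::'a set)) (sdim y - sdim x) r"
proof -
  define Q where "Q = card (UNIV::'a set)"
  have Q2: "1 < Q" using card_field_ge2[where 'a='a] by (simp add: Q_def)
  have le: "sdim x \<le> sdim y" by (rule sdim_mono[OF x y xy])
  have cx: "card x = Q ^ sdim x" and cy: "card y = Q ^ sdim x * Q ^ (sdim y - sdim x)"
    using card_subspace[OF x] card_subspace[OF y] le by (simp_all add: Q_def flip: power_add)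
  have seteq: "{a \<in> subspace_lattice n. x \<subseteq> a \<and> a \<subseteq> y \<and> card a = card x * Q ^ r}
      = {a \<in> subspace_lattice n. x \<subseteq> a \<and> a \<subseteq> y \<and> sdim a = sdim x + r}"
  proof (rule Collect_cong, rule conj_cong[OF refl])
    fix a assume a: "a \<in> (subspace_lattice n :: (nat \<Rightarrow> 'a) set set)"
    have "card a = card x * Q ^ r \<longleftrightarrow> Q ^ sdim a = Q ^ (sdim x + r)"
      using card_subspace[OF a] cx by (simp add: Q_def power_add)
    also have "\<dots> \<longleftrightarrow> sdim a = sdim x + r" using Q2 by (rule power_inject_exp)
    finally show "(x \<subseteq> a \<and> a \<subseteq> y \<and> card a = card x * Q ^ r) = (x \<subseteq> a \<and> a \<subseteq> y \<and> sdim a = sdim x + r)"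
      by simp
  qed
  have "card {a \<in> subspace_lattice n. x \<subseteq> a \<and> a \<subseteq> y \<and> sdim a = sdim x + r} * ((Q ^ sdim x) ^ r * PP Q r r)
      = (Q ^ sdim x) ^ r * PP Q (sdim y - sdim x) r"
    using card_Aset[OF x y xy, of r] unfolding Q_def[symmetric] seteq
    by (simp only: cx cy prod_factor)
  moreover have "(Q ^ sdim x) ^ r > 0" using Q2 by simp
  ultimately show ?thesis unfolding Q_def[symmetric] using Q2 by (simp add: ac_simps)
qed



definition qf :: "nat \<Rightarrow> nat \<Rightarrow> rat" where
  "qf q m = (\<Prod>k = 1..m. of_nat q ^ k - 1)"

lemma qbinom_qf: "qbinom q M r = qf q M / (qf q r * qf q (M - r))"
  by (simp add: qbinom_def qf_def)

lemma qf_0[simp]: "qf q 0 = 1" by (simp add: qf_def)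

lemma qf_Suc: "qf q (Suc m) = qf q m * (of_nat q ^ Suc m - 1)"
  by (simp add: qf_def prod.cl_ivl_Suc)

lemma qpow_ne1: "2 \<le> q \<Longrightarrow> 0 < k \<Longrightarrow> (of_nat q :: rat) ^ k - 1 \<noteq> 0"
proof -
  assume q: "2 \<le> q" and k: "0 < k"
  have "q ^ 1 \<le> q ^ k" using q k by (intro power_increasing) auto
  hence "q \<le> q ^ k" by simp
  hence "q ^ k \<noteq> 1" using q by linarith
  hence "(of_nat (q ^ k) :: rat) \<noteq> 1" by (metis of_nat_1 of_nat_eq_iff)
  thus ?thesis by simp
qed

lemma qf_nz: "2 \<le> q \<Longrightarrow> qf q m \<noteq> 0"
proof (induction m)
  case (Suc m)
  have "(of_nat q :: rat) ^ Suc m - 1 \<noteq> 0" using Suc.prems by (intro qpow_ne1) auto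
  thus ?case using Suc by (simp only: qf_Suc mult_eq_0_iff) simp
qed simp

definition gb :: "nat \<Rightarrow> nat \<Rightarrow> nat \<Rightarrow> rat" where
  "gb q M r = (if r \<le> M then qbinom q M r else 0)"

lemma PP_zero: "M < r \<Longrightarrow> PP q M r = 0"
  unfolding PP_def by (rule prod_zero) auto

lemma PP_qf:
  assumes q: "2 \<le> q" 
  shows "r \<le> M \<Longrightarrow> of_nat (PP q M r) * qf q (M - r) = (\<Prod>i<r. (of_nat q::rat) ^ i) * qf q M"
proof (induction r)
  case 0 thus ?case by (simp add: PP_def)
next
  case (Suc r)
  define Q :: rat where "Q = of_nat q"
  have rM: "r < M" using Suc.prems by simp
  have IH: "of_nat (PP q M r) * qf q (M - r) = (\<Prod>i<r. Q ^ i) * qf q M"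
    using Suc.IH rM by (simp add: Q_def)
  have le: "q ^ r \<le> q ^ M" using q rM by (intro power_increasing) auto
  have PS: "of_nat (PP q M (Suc r)) = of_nat (PP q M r) * (Q ^ M - Q ^ r)"
    using le by (simp add: PP_def Q_def of_nat_diff)
  have MS: "M - r = Suc (M - Suc r)" using rM by simp
  have qfs: "qf q (M - r) = qf q (M - Suc r) * (Q ^ (M - r) - 1)"
    unfolding MS qf_Suc Q_def ..
  have nz: "Q ^ (M - r) - 1 \<noteq> 0" unfolding Q_def using q rM by (intro qpow_ne1) auto
  have QM: "Q ^ M = Q ^ r * Q ^ (M - r)" using rM by (simp flip: power_add)
  have "of_nat (PP q M (Suc r)) * qf q (M - Suc r) * (Q ^ (M - r) - 1)
      = (Q ^ M - Q ^ r) * (of_nat (PP q M r) * qf q (M - r))"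
    unfolding PS qfs by (simp add: algebra_simps)
  also have "\<dots> = (Q ^ M - Q ^ r) * ((\<Prod>i<r. Q ^ i) * qf q M)" by (simp only: IH)
  also have "\<dots> = (\<Prod>i<Suc r. Q ^ i) * qf q M * (Q ^ (M - r) - 1)"
    unfolding QM by (simp add: algebra_simps)
  finally show ?case using nz unfolding Q_def by simp
qed

lemma PP_pos: "2 \<le> q \<Longrightarrow> 0 < PP q r r"
  unfolding PP_def by (rule prod_pos) (auto intro: power_strict_increasing)

lemma PP_gb:
  assumes q: "2 \<le> q"
  shows "of_nat (PP q M r) = gb q M r * of_nat (PP q r r)"
proof (cases "r \<le> M")
  case False thus ?thesis by (simp add: PP_zero gb_def)
next
  case True
  have E: "(\<Prod>i<r. (of_nat q::rat) ^ i) \<noteq> 0" using q by simp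
  have a: "of_nat (PP q M r) = (\<Prod>i<r. (of_nat q::rat) ^ i) * qf q M / qf q (M - r)"
    using PP_qf[OF q True] qf_nz[OF q] by (simp add: field_simps)
  have b: "of_nat (PP q r r) = (\<Prod>i<r. (of_nat q::rat) ^ i) * qf q r"
    using PP_qf[OF q, of r r] by simp
  show ?thesis unfolding a b gb_def qbinom_qf using True qf_nz[OF q] E
    by (simp add: field_simps)
qed

lemma gb_pascal:
  assumes q: "2 \<le> q"
  shows "gb q (Suc m) r = of_nat q ^ r * gb q m r + (if r = 0 then 0 else gb q m (r - 1))"
proof (cases r)
  case 0 thus ?thesis by (simp add: gb_def qbinom_qf qf_nz[OF q])
next
  case (Suc s)
  consider "m < s" | "s = m" | "s < m" by linarith
  thus ?thesis
  proof cases
    case 1 thus ?thesis using Suc by (simp add: gb_def)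
  next
    case 2 thus ?thesis using Suc by (simp add: gb_def qbinom_qf qf_nz[OF q])
  next
    case 3
    then obtain k where m: "m = s + Suc k" by (metis add_Suc_right less_imp_Suc_add add.commute)
    define Q :: rat where "Q = of_nat q"
    have n1: "Q ^ Suc s - 1 \<noteq> 0" "Q ^ Suc k - 1 \<noteq> 0" unfolding Q_def by (rule qpow_ne1[OF q], simp)+
    have e1: "Suc m - Suc s = Suc k" "m - Suc s = k" "m - s = Suc k" using m by auto
    have key: "Q ^ Suc (Suc (s + k)) - 1 = Q ^ Suc s * (Q ^ Suc k - 1) + (Q ^ Suc s - 1)"
      by (simp add: algebra_simps flip: power_add)
    have ms: "Suc m = Suc (Suc (s + k))" using m by simp
    have abs: "\<And>X c P a b S K :: rat. a \<noteq> 0 \<Longrightarrow> b \<noteq> 0 \<Longrightarrow> S \<noteq> 0 \<Longrightarrow> K \<noteq> 0 \<Longrightarrow>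
       c = P * b + a \<Longrightarrow> X * c / (S * a * (K * b)) = P * (X / (S * a * K)) + X / (S * (K * b))"
      by (simp add: field_simps)
    have "gb q (Suc m) r = qf q m * (Q ^ Suc m - 1) / (qf q s * (Q ^ Suc s - 1) * (qf q k * (Q ^ Suc k - 1)))"
      using Suc 3 by (simp add: gb_def qbinom_qf e1 qf_Suc Q_def)
    also have "\<dots> = Q ^ Suc s * (qf q m / (qf q s * (Q ^ Suc s - 1) * qf q k)) + qf q m / (qf q s * (qf q k * (Q ^ Suc k - 1)))"
      by (rule abs[OF n1 qf_nz[OF q] qf_nz[OF q]]) (simp only: ms key)
    also have "\<dots> = of_nat q ^ r * gb q m r + (if r = 0 then 0 else gb q m (r - 1))"
      using Suc 3 by (simp add: gb_def qbinom_qf e1 qf_Suc Q_def)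
    finally show ?thesis .
  qed
qed



definition tt :: "nat \<Rightarrow> nat \<Rightarrow> rat" where
  "tt q r = (-1) ^ r * of_nat q ^ (r choose 2)"

lemma tt_Suc: "tt q (Suc r) = - (of_nat q ^ r * tt q r)"
proof -
  have "Suc r choose 2 = r + (r choose 2)" by (simp add: numeral_2_eq_2)
  thus ?thesis by (simp add: tt_def power_add)
qed

lemma gb_0_0: "gb q 0 0 = 1" by (simp add: gb_def qbinom_qf)

lemma alt_sum:
  assumes q: "2 \<le> q"
  shows "(\<Sum>r\<le>M. tt q r * gb q M r) = (if M = 0 then 1 else 0)"
proof (cases M)
  case 0 thus ?thesis by (simp add: gb_0_0 tt_def numeral_2_eq_2)
next
  case (Suc m)
  define Q :: rat where "Q = of_nat q"
  have "(\<Sum>r\<le>Suc m. tt q r * gb q (Suc m) r)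
      = (\<Sum>r\<le>Suc m. tt q r * (Q ^ r * gb q m r)) + (\<Sum>r\<le>Suc m. tt q r * (if r = 0 then 0 else gb q m (r - 1)))"
    by (simp add: gb_pascal[OF q] Q_def sum.distrib algebra_simps)
  also have "(\<Sum>r\<le>Suc m. tt q r * (Q ^ r * gb q m r)) = (\<Sum>r\<le>m. tt q r * (Q ^ r * gb q m r))"
    by (simp add: gb_def)
  also have "(\<Sum>r\<le>Suc m. tt q r * (if r = 0 then 0 else gb q m (r - 1))) = (\<Sum>r\<le>m. tt q (Suc r) * gb q m r)"
    by (subst sum.atMost_Suc_shift) simp
  also have "\<dots> = - (\<Sum>r\<le>m. tt q r * (Q ^ r * gb q m r))"
    by (simp add: tt_Suc Q_def sum_negf algebra_simps)
  finally show ?thesis using Suc by simp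
qed

lemma gb_sym: "r \<le> M \<Longrightarrow> gb q M (M - r) = gb q M r"
  by (simp add: gb_def qbinom_qf mult.commute)

lemma alt_sum_rev:
  assumes q: "2 \<le> q"
  shows "(\<Sum>r\<le>M. tt q (M - r) * gb q M r) = (if M = 0 then 1 else 0)"
proof -
  have "(\<Sum>r\<le>M. tt q (M - r) * gb q M r) = (\<Sum>r=0..M. tt q (M - r) * gb q M r)"
    by (simp add: atMost_atLeast0)
  also have "\<dots> = (\<Sum>r=0..M. tt q (M - (M + 0 - r)) * gb q M (M + 0 - r))"
    by (rule sum.atLeastAtMost_rev)
  also have "\<dots> = (\<Sum>r=0..M. tt q r * gb q M r)"
    by (rule sum.cong[OF refl]) (simp add: gb_sym)
  also have "\<dots> = (\<Sum>r\<le>M. tt q r * gb q M r)" by (simp add: atMost_atLeast0)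
  finally show ?thesis using alt_sum[OF q] by simp
qed



lemma finite_L: "finite (subspace_lattice n :: (nat \<Rightarrow> 'a::{finite,field}) set set)"
  by (rule finite_subset[of _ "Pow (Fn n)"]) (auto simp: subspace_lattice_def intro: finite_Fn)

lemma count_gb:
  fixes x y :: "(nat \<Rightarrow> 'a::{finite,field}) set"
  assumes x: "x \<in> subspace_lattice n" and y: "y \<in> subspace_lattice n" and xy: "x \<subseteq> y"
  shows "of_nat (card {a \<in> subspace_lattice n. x \<subseteq> a \<and> a \<subseteq> y \<and> sdim a = sdim x + r})
     = gb (card (UNIV::'a set)) (sdim y - sdim x) r"
proof -
  define Q where "Q = card (UNIV::'a set)"
  have q: "2 \<le> Q" unfolding Q_def by (rule card_field_ge2)
  define C where "C = card {a \<in> subspace_lattice n. x \<subseteq> a \<and> a \<subseteq> y \<and> sdim a = sdim x + r}"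
  have "C * PP Q r r = PP Q (sdim y - sdim x) r" unfolding C_def Q_def by (rule count_interval[OF x y xy])
  hence "(of_nat C :: rat) * of_nat (PP Q r r) = gb Q (sdim y - sdim x) r * of_nat (PP Q r r)"
    by (metis PP_gb[OF q] of_nat_mult)
  moreover have "(of_nat (PP Q r r) :: rat) \<noteq> 0" using PP_pos[OF q, of r] by simp
  ultimately show ?thesis unfolding C_def Q_def by simp
qed

lemma interval_sum:
  fixes x y :: "(nat \<Rightarrow> 'a::{finite,field}) set" and f :: "nat \<Rightarrow> rat"
  assumes x: "x \<in> subspace_lattice n" and y: "y \<in> subspace_lattice n" and xy: "x \<subseteq> y"
  shows "(\<Sum>a\<in>{a \<in> subspace_lattice n. x \<subseteq> a \<and> a \<subseteq> y}. f (sdim a - sdim x))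
     = (\<Sum>r\<le>sdim y - sdim x. gb (card (UNIV::'a set)) (sdim y - sdim x) r * f r)"
proof -
  define I where "I = {a \<in> subspace_lattice n. x \<subseteq> a \<and> a \<subseteq> y}"
  have finI: "finite I" unfolding I_def by (rule finite_subset[OF _ finite_L]) auto
  have img: "(\<lambda>a. sdim a - sdim x) ` I \<subseteq> {..sdim y - sdim x}"
  proof
    fix r assume "r \<in> (\<lambda>a. sdim a - sdim x) ` I"
    then obtain a where a: "a \<in> I" and r: "r = sdim a - sdim x" by blast
    have "sdim a \<le> sdim y" using a y by (intro sdim_mono[of a n y]) (auto simp: I_def)
    thus "r \<in> {..sdim y - sdim x}" using r by simp
  qed
  have "(\<Sum>a\<in>I. f (sdim a - sdim x))
      = (\<Sum>r\<le>sdim y - sdim x. \<Sum>a\<in>{a. a \<in> I \<and> sdim a - sdim x = r}. f (sdim a - sdim x))"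
    by (rule sum.group[OF finI _ img, symmetric]) simp
  also have "\<dots> = (\<Sum>r\<le>sdim y - sdim x. gb (card (UNIV::'a set)) (sdim y - sdim x) r * f r)"
  proof (rule sum.cong[OF refl])
    fix r assume "r \<in> {..sdim y - sdim x}"
    have seteq: "{a. a \<in> I \<and> sdim a - sdim x = r} = {a \<in> subspace_lattice n. x \<subseteq> a \<and> a \<subseteq> y \<and> sdim a = sdim x + r}"
    proof (rule set_eqI, rule iffI)
      fix a assume "a \<in> {a. a \<in> I \<and> sdim a - sdim x = r}"
      hence a: "a \<in> I" "sdim a - sdim x = r" by auto
      have "sdim x \<le> sdim a" using a x by (intro sdim_mono[of x n a]) (auto simp: I_def)
      thus "a \<in> {a \<in> subspace_lattice n. x \<subseteq> a \<and> a \<subseteq> y \<and> sdim a = sdim x + r}" using a by (auto simp: I_def)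
    qed (auto simp: I_def)
    have "(\<Sum>a\<in>{a. a \<in> I \<and> sdim a - sdim x = r}. f (sdim a - sdim x)) = (\<Sum>a\<in>{a. a \<in> I \<and> sdim a - sdim x = r}. f r)"
      by (rule sum.cong) auto
    also have "\<dots> = of_nat (card {a. a \<in> I \<and> sdim a - sdim x = r}) * f r" by simp
    also have "\<dots> = gb (card (UNIV::'a set)) (sdim y - sdim x) r * f r"
      unfolding seteq count_gb[OF x y xy] ..
    finally show "(\<Sum>a\<in>{a. a \<in> I \<and> sdim a - sdim x = r}. f (sdim a - sdim x)) = gb (card (UNIV::'a set)) (sdim y - sdim x) r * f r" .
  qed
  finally show ?thesis unfolding I_def .
qed

lemma eq_of_sdim:
  fixes x y :: "(nat \<Rightarrow> 'a::{finite,field}) set"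
  assumes x: "x \<in> subspace_lattice n" and y: "y \<in> subspace_lattice n" and xy: "x \<subseteq> y"
    and d: "sdim x = sdim y"
  shows "x = y"
proof -
  have "card x = card y" using card_subspace[OF x] card_subspace[OF y] d by simp
  thus ?thesis using card_subset_eq[OF L_fin[OF y] xy] by simp
qed

definition mu :: "nat \<Rightarrow> nat \<Rightarrow> int" where
  "mu q d = (-1) ^ d * int q ^ (d choose 2)"

lemma of_int_mu: "(of_int (mu q d) :: rat) = tt q d"
  by (simp add: mu_def tt_def)

lemma mob_up:
  fixes y z :: "(nat \<Rightarrow> 'a::{finite,field}) set"
  assumes y: "y \<in> subspace_lattice n" and z: "z \<in> subspace_lattice n" and yz: "y \<subseteq> z"
  shows "(\<Sum>b\<in>{b \<in> subspace_lattice n. y \<subseteq> b \<and> b \<subseteq> z}. mu (card (UNIV::'a set)) (sdim b - sdim y))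
    = (if y = z then 1 else 0)"
proof -
  have q: "2 \<le> card (UNIV::'a set)" by (rule card_field_ge2)
  have "(of_int (\<Sum>b\<in>{b \<in> subspace_lattice n. y \<subseteq> b \<and> b \<subseteq> z}. mu (card (UNIV::'a set)) (sdim b - sdim y)) :: rat)
     = (\<Sum>b\<in>{b \<in> subspace_lattice n. y \<subseteq> b \<and> b \<subseteq> z}. tt (card (UNIV::'a set)) (sdim b - sdim y))"
    by (simp add: of_int_mu)
  also have "\<dots> = (\<Sum>r\<le>sdim z - sdim y. tt (card (UNIV::'a set)) r * gb (card (UNIV::'a set)) (sdim z - sdim y) r)"
    unfolding interval_sum[OF y z yz] by (simp add: mult.commute)
  also have "\<dots> = (if sdim z - sdim y = 0 then 1 else 0)" by (rule alt_sum[OF q])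
  also have "\<dots> = of_int (if y = z then 1 else 0)"
    using eq_of_sdim[OF y z yz] sdim_mono[OF y z yz] by auto
  finally show ?thesis by (simp only: of_int_eq_iff)
qed

lemma mob_down:
  fixes x y :: "(nat \<Rightarrow> 'a::{finite,field}) set"
  assumes x: "x \<in> subspace_lattice n" and y: "y \<in> subspace_lattice n" and xy: "x \<subseteq> y"
  shows "(\<Sum>a\<in>{a \<in> subspace_lattice n. x \<subseteq> a \<and> a \<subseteq> y}. mu (card (UNIV::'a set)) (sdim y - sdim a))
    = (if x = y then 1 else 0)"
proof -
  have q: "2 \<le> card (UNIV::'a set)" by (rule card_field_ge2)
  define M where "M = sdim y - sdim x"
  have "(of_int (\<Sum>a\<in>{a \<in> subspace_lattice n. x \<subseteq> a \<and> a \<subseteq> y}. mu (card (UNIV::'a set)) (sdim y - sdim a)) :: rat)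
     = (\<Sum>a\<in>{a \<in> subspace_lattice n. x \<subseteq> a \<and> a \<subseteq> y}. tt (card (UNIV::'a set)) (M - (sdim a - sdim x)))"
  proof -
    have "\<And>a. a \<in> {a \<in> subspace_lattice n. x \<subseteq> a \<and> a \<subseteq> y} \<Longrightarrow> sdim y - sdim a = M - (sdim a - sdim x)"
    proof -
      fix a assume a: "a \<in> {a \<in> subspace_lattice n. x \<subseteq> a \<and> a \<subseteq> y}"
      have "sdim x \<le> sdim a" "sdim a \<le> sdim y" using a x y sdim_mono[of x n a] sdim_mono[of a n y] by auto
      thus "sdim y - sdim a = M - (sdim a - sdim x)" unfolding M_def by simp
    qed
    thus ?thesis by (simp add: of_int_mu)
  qed
  also have "\<dots> = (\<Sum>r\<le>M. gb (card (UNIV::'a set)) M r * tt (card (UNIV::'a set)) (M - r))"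
    unfolding M_def by (rule interval_sum[OF x y xy, of "\<lambda>r. tt (card (UNIV::'a set)) (sdim y - sdim x - r)"])
  also have "\<dots> = (\<Sum>r\<le>M. tt (card (UNIV::'a set)) (M - r) * gb (card (UNIV::'a set)) M r)"
    by (simp add: mult.commute)
  also have "\<dots> = (if M = 0 then 1 else 0)" by (rule alt_sum_rev[OF q])
  also have "\<dots> = of_int (if x = y then 1 else 0)"
    using eq_of_sdim[OF x y xy] sdim_mono[OF x y xy] by (auto simp: M_def)
  finally show ?thesis by (simp only: of_int_eq_iff)
qed



lemma is_J_unique:
  fixes P :: "'b set set"
  assumes finP: "finite P" and f: "is_J P (\<subseteq>) f" and g: "is_J P (\<subseteq>) g"
  shows "f = g"
proof -
  define m where "m = (\<lambda>x y z. card {a \<in> P. x \<subseteq> a \<and> a \<subseteq> y} + card {b \<in> P. y \<subseteq> b \<and> b \<subseteq> z})"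
  have main: "\<And>N. \<forall>x y z. (x, y, z) \<in> chains3 P (\<subseteq>) \<longrightarrow> m x y z = N \<longrightarrow> f x y z = g x y z"
  proof -
    fix N show "\<forall>x y z. (x, y, z) \<in> chains3 P (\<subseteq>) \<longrightarrow> m x y z = N \<longrightarrow> f x y z = g x y z"
    proof (induction N rule: less_induct)
      case (less N)
      show ?case
      proof (intro allI impI)
        fix x y z assume c: "(x, y, z) \<in> chains3 P (\<subseteq>)" and mN: "m x y z = N"
        hence xP: "x \<in> P" and yP: "y \<in> P" and zP: "z \<in> P" and xy: "x \<subseteq> y" and yz: "y \<subseteq> z"
          by (auto simp: chains3_def)
        define S where "S = {(a, b). a \<in> P \<and> b \<in> P \<and> x \<subseteq> a \<and> a \<subseteq> y \<and> y \<subseteq> b \<and> b \<subseteq> z}"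
        have finS: "finite S" by (rule finite_subset[of _ "P \<times> P"]) (use finP in \<open>auto simp: S_def\<close>)
        have xzS: "(x, z) \<in> S" using xP zP xy yz by (simp add: S_def)
        have sf: "(\<Sum>(a, b)\<in>S. f a y b) = delta3 x y z" using f c unfolding is_J_def S_def by blast
        have sg: "(\<Sum>(a, b)\<in>S. g a y b) = delta3 x y z" using g c unfolding is_J_def S_def by blast
        have rest: "(\<Sum>(a, b)\<in>S - {(x, z)}. f a y b) = (\<Sum>(a, b)\<in>S - {(x, z)}. g a y b)"
        proof (rule sum.cong[OF refl])
          fix p assume p: "p \<in> S - {(x, z)}"
          obtain a b where pab: "p = (a, b)" by (cases p)
          have ab: "(a, b) \<in> S" and ne: "(a, b) \<noteq> (x, z)" using p pab by auto
          hence aP: "a \<in> P" and bP: "b \<in> P" and xa: "x \<subseteq> a" and ay: "a \<subseteq> y" and yb: "y \<subseteq> b" and bz: "b \<subseteq> z"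
            by (auto simp: S_def)
          have c': "(a, y, b) \<in> chains3 P (\<subseteq>)" using aP yP bP ay yb by (simp add: chains3_def)
          have s1: "{c \<in> P. a \<subseteq> c \<and> c \<subseteq> y} \<subseteq> {c \<in> P. x \<subseteq> c \<and> c \<subseteq> y}" using xa by blast
          have s2: "{c \<in> P. y \<subseteq> c \<and> c \<subseteq> b} \<subseteq> {c \<in> P. y \<subseteq> c \<and> c \<subseteq> z}" using bz by blast
          have f1: "finite {c \<in> P. x \<subseteq> c \<and> c \<subseteq> y}" "finite {c \<in> P. y \<subseteq> c \<and> c \<subseteq> z}" using finP by auto
          have "m a y b < m x y z"
          proof (cases "a = x")
            case True
            hence "b \<noteq> z" using ne by simp
            hence "z \<notin> {c \<in> P. y \<subseteq> c \<and> c \<subseteq> b}" using bz by blast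
            moreover have "z \<in> {c \<in> P. y \<subseteq> c \<and> c \<subseteq> z}" using zP yz by blast
            ultimately have "{c \<in> P. y \<subseteq> c \<and> c \<subseteq> b} \<subset> {c \<in> P. y \<subseteq> c \<and> c \<subseteq> z}" using s2 by blast
            hence "card {c \<in> P. y \<subseteq> c \<and> c \<subseteq> b} < card {c \<in> P. y \<subseteq> c \<and> c \<subseteq> z}"
              by (rule psubset_card_mono[OF f1(2)])
            thus ?thesis unfolding m_def using True by simp
          next
            case False
            hence "x \<notin> {c \<in> P. a \<subseteq> c \<and> c \<subseteq> y}" using xa by blast
            moreover have "x \<in> {c \<in> P. x \<subseteq> c \<and> c \<subseteq> y}" using xP xy by blast
            ultimately have "{c \<in> P. a \<subseteq> c \<and> c \<subseteq> y} \<subset> {c \<in> P. x \<subseteq> c \<and> c \<subseteq> y}" using s1 by blast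
            hence "card {c \<in> P. a \<subseteq> c \<and> c \<subseteq> y} < card {c \<in> P. x \<subseteq> c \<and> c \<subseteq> y}"
              by (rule psubset_card_mono[OF f1(1)])
            moreover have "card {c \<in> P. y \<subseteq> c \<and> c \<subseteq> b} \<le> card {c \<in> P. y \<subseteq> c \<and> c \<subseteq> z}"
              by (rule card_mono[OF f1(2) s2])
            ultimately show ?thesis unfolding m_def by simp
          qed
          hence "f a y b = g a y b" using less.IH[of "m a y b"] c' mN by blast
          thus "(case p of (a, b) \<Rightarrow> f a y b) = (case p of (a, b) \<Rightarrow> g a y b)" using pab by simp
        qed
        have "f x y z + (\<Sum>(a, b)\<in>S - {(x, z)}. f a y b) = g x y z + (\<Sum>(a, b)\<in>S - {(x, z)}. g a y b)"
          using sf sg sum.remove[OF finS xzS, of "\<lambda>(a,b). f a y b"] sum.remove[OF finS xzS, of "\<lambda>(a,b). g a y b"]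
          by simp
        thus "f x y z = g x y z" using rest by simp
      qed
    qed
  qed
  show ?thesis
  proof (intro ext)
    fix x y z
    show "f x y z = g x y z"
    proof (cases "(x, y, z) \<in> chains3 P (\<subseteq>)")
      case True thus ?thesis using main by blast
    next
      case False thus ?thesis using f g by (simp add: is_J_def)
    qed
  qed
qed

definition J0 :: "nat \<Rightarrow> (nat \<Rightarrow> 'a::{finite,field}) set \<Rightarrow> (nat \<Rightarrow> 'a) set \<Rightarrow> (nat \<Rightarrow> 'a) set \<Rightarrow> int" where
  "J0 n x y z = (if (x, y, z) \<in> chains3 (subspace_lattice n :: (nat \<Rightarrow> 'a) set set) (\<subseteq>)
     then mu (card (UNIV::'a set)) (sdim y - sdim x) * mu (card (UNIV::'a set)) (sdim z - sdim y) else 0)"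

lemma isJ_J0: "is_J (subspace_lattice n :: (nat \<Rightarrow> 'a::{finite,field}) set set) (\<subseteq>) (J0 n)"
  unfolding is_J_def
proof (intro conjI allI impI)
  fix x y z :: "(nat \<Rightarrow> 'a) set"
  assume "(x, y, z) \<notin> chains3 (subspace_lattice n) (\<subseteq>)"
  thus "J0 n x y z = 0" by (simp add: J0_def)
next
  fix x y z :: "(nat \<Rightarrow> 'a) set"
  assume c: "(x, y, z) \<in> chains3 (subspace_lattice n) (\<subseteq>)"
  hence x: "x \<in> subspace_lattice n" and y: "y \<in> subspace_lattice n" and z: "z \<in> subspace_lattice n"
    and xy: "x \<subseteq> y" and yz: "y \<subseteq> z" by (auto simp: chains3_def)
  define Q where "Q = card (UNIV::'a set)"
  define Ia where "Ia = {a \<in> (subspace_lattice n :: (nat \<Rightarrow> 'a) set set). x \<subseteq> a \<and> a \<subseteq> y}"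
  define Ib where "Ib = {b \<in> (subspace_lattice n :: (nat \<Rightarrow> 'a) set set). y \<subseteq> b \<and> b \<subseteq> z}"
  have S: "{(a, b). a \<in> subspace_lattice n \<and> b \<in> subspace_lattice n \<and> x \<subseteq> a \<and> a \<subseteq> y \<and> y \<subseteq> b \<and> b \<subseteq> z} = Ia \<times> Ib"
    by (auto simp: Ia_def Ib_def)
  have "(\<Sum>(a, b)\<in>Ia \<times> Ib. J0 n a y b) = (\<Sum>(a, b)\<in>Ia \<times> Ib. mu Q (sdim y - sdim a) * mu Q (sdim b - sdim y))"
    by (rule sum.cong[OF refl]) (use y in \<open>auto simp: J0_def chains3_def Ia_def Ib_def Q_def\<close>)
  also have "\<dots> = (\<Sum>a\<in>Ia. mu Q (sdim y - sdim a)) * (\<Sum>b\<in>Ib. mu Q (sdim b - sdim y))"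
    by (simp add: sum_product sum.cartesian_product)
  also have "\<dots> = (if x = y then 1 else 0) * (if y = z then 1 else 0)"
    unfolding Ia_def Ib_def Q_def mob_down[OF x y xy] mob_up[OF y z yz] ..
  also have "\<dots> = delta3 x y z" by (simp add: delta3_def)
  finally show "(\<Sum>(a, b)\<in>{(a, b). a \<in> subspace_lattice n \<and> b \<in> subspace_lattice n \<and> x \<subseteq> a \<and> a \<subseteq> y \<and> y \<subseteq> b \<and> b \<subseteq> z}. J0 n a y b) = delta3 x y z"
    unfolding S .
qed

lemma Jfun_eq: "Jfun (subspace_lattice n :: (nat \<Rightarrow> 'a::{finite,field}) set set) (\<subseteq>) = J0 n"
  unfolding Jfun_def
proof (rule the_equality)
  show "is_J (subspace_lattice n :: (nat \<Rightarrow> 'a) set set) (\<subseteq>) (J0 n)" by (rule isJ_J0)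
next
  fix f assume "is_J (subspace_lattice n :: (nat \<Rightarrow> 'a) set set) (\<subseteq>) f"
  thus "f = J0 n" by (rule is_J_unique[OF finite_L _ isJ_J0])
qed



lemma zero_L: "({0} :: (nat \<Rightarrow> 'a::{finite,field}) set) \<in> subspace_lattice n"
  and sdim_zero: "sdim ({0} :: (nat \<Rightarrow> 'a::{finite,field}) set) = 0"
proof -
  have sub: "VS.subspace ({0} :: (nat \<Rightarrow> 'a) set)" using VS.subspace_span[of "{}"] by simp
  have "(0 :: nat \<Rightarrow> 'a) \<in> Fn n" by (simp add: Fn_def)
  thus L: "({0} :: (nat \<Rightarrow> 'a) set) \<in> subspace_lattice n" using sub by (simp add: subspace_lattice_def)
  have "card (UNIV::'a set) ^ sdim ({0} :: (nat \<Rightarrow> 'a) set) = card (UNIV::'a set) ^ 0"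
    using card_subspace[OF L] by simp
  moreover have "1 < card (UNIV::'a set)" using card_field_ge2[where 'a='a] by simp
  ultimately show "sdim ({0} :: (nat \<Rightarrow> 'a) set) = 0" by (simp only: power_inject_exp)
qed

lemma Fn_L: "(Fn n :: (nat \<Rightarrow> 'a::{finite,field}) set) \<in> subspace_lattice n"
  and sdim_Fn: "sdim (Fn n :: (nat \<Rightarrow> 'a::{finite,field}) set) = n"
proof -
  show L: "(Fn n :: (nat \<Rightarrow> 'a) set) \<in> subspace_lattice n"
    using subspace_Fn by (simp add: subspace_lattice_def)
  have "card (UNIV::'a set) ^ sdim (Fn n :: (nat \<Rightarrow> 'a) set) = card (UNIV::'a set) ^ n"
    using card_subspace[OF L] card_Fn[where 'a='a, of n] by simp
  moreover have "1 < card (UNIV::'a set)" using card_field_ge2[where 'a='a] by simp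
  ultimately show "sdim (Fn n :: (nat \<Rightarrow> 'a) set) = n" by (simp only: power_inject_exp)
qed

lemma sdim_le_n: "a \<in> (subspace_lattice n :: (nat \<Rightarrow> 'a::{finite,field}) set set) \<Longrightarrow> sdim a \<le> n"
  using sdim_mono[OF _ Fn_L, of a n] sdim_Fn[where 'a='a] by (auto simp: subspace_lattice_def)

lemma poset_rank_L: "poset_rank (subspace_lattice n :: (nat \<Rightarrow> 'a::{finite,field}) set set) sdim = n"
  unfolding poset_rank_def
proof (rule Max_eqI)
  show "finite (sdim ` (subspace_lattice n :: (nat \<Rightarrow> 'a) set set))" using finite_L by blast
  show "\<And>y. y \<in> sdim ` (subspace_lattice n :: (nat \<Rightarrow> 'a) set set) \<Longrightarrow> y \<le> n" using sdim_le_n by blast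
  show "n \<in> sdim ` (subspace_lattice n :: (nat \<Rightarrow> 'a) set set)"
    by (rule image_eqI[of _ _ "Fn n"]) (simp_all only: sdim_Fn Fn_L)
qed

lemma count_below:
  fixes y :: "(nat \<Rightarrow> 'a::{finite,field}) set"
  assumes y: "y \<in> subspace_lattice n"
  shows "of_nat (card {x \<in> subspace_lattice n. x \<subseteq> y \<and> sdim x = i}) = gb (card (UNIV::'a set)) (sdim y) i"
proof -
  have "{x \<in> subspace_lattice n. x \<subseteq> y \<and> sdim x = i}
      = {a \<in> subspace_lattice n. {0} \<subseteq> a \<and> a \<subseteq> y \<and> sdim a = sdim ({0} :: (nat \<Rightarrow> 'a) set) + i}"
    by (auto simp: sdim_zero subspace_lattice_def VS.subspace_0)
  moreover have "{0} \<subseteq> y" using y by (simp add: subspace_lattice_def VS.subspace_0)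
  ultimately show ?thesis using count_gb[OF zero_L y, of i] by (simp add: sdim_zero)
qed

lemma count_chains:
  fixes i j k n :: nat
  assumes ijk: "i \<le> j" "j \<le> k" "k \<le> n"
  shows "of_nat (card {c. c \<in> chains3 (subspace_lattice n :: (nat \<Rightarrow> 'a::{finite,field}) set set) (\<subseteq>)
            \<and> (case c of (x, y, z) \<Rightarrow> (sdim x, sdim y, sdim z)) = (i, j, k)})
       = gb (card (UNIV::'a set)) n k * gb (card (UNIV::'a set)) k j * gb (card (UNIV::'a set)) j i"
proof -
  define L where "L = (subspace_lattice n :: (nat \<Rightarrow> 'a) set set)"
  define Q where "Q = card (UNIV::'a set)"
  define Z where "Z = {z \<in> L. z \<subseteq> Fn n \<and> sdim z = k}"
  define Y where "Y = (\<lambda>z. {y \<in> L. y \<subseteq> z \<and> sdim y = j})"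
  define X where "X = (\<lambda>y. {x \<in> L. x \<subseteq> y \<and> sdim x = i})"
  have finL: "finite L" unfolding L_def by (rule finite_L)
  have eq: "{c. c \<in> chains3 L (\<subseteq>) \<and> (case c of (x, y, z) \<Rightarrow> (sdim x, sdim y, sdim z)) = (i, j, k)}
      = (\<lambda>(z, y, x). (x, y, z)) ` (SIGMA z:Z. SIGMA y:Y z. X y)"
    by (auto simp: chains3_def Z_def Y_def X_def L_def subspace_lattice_def image_iff)
  have inj: "inj_on (\<lambda>(z, y, x). (x, y, z)) (SIGMA z:Z. SIGMA y:Y z. X y)"
    by (rule inj_onI) auto
  have fZ: "finite Z" and fY: "\<And>z. finite (Y z)" and fX: "\<And>y. finite (X y)"
    using finL by (auto simp: Z_def Y_def X_def)
  have "card (SIGMA z:Z. SIGMA y:Y z. X y) = (\<Sum>z\<in>Z. \<Sum>y\<in>Y z. card (X y))"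
    using fZ fY fX by (simp add: card_SigmaI)
  hence "(of_nat (card (SIGMA z:Z. SIGMA y:Y z. X y)) :: rat) = (\<Sum>z\<in>Z. \<Sum>y\<in>Y z. of_nat (card (X y)))"
    by simp
  also have "\<dots> = (\<Sum>z\<in>Z. \<Sum>y\<in>Y z. gb Q j i)"
    by (intro sum.cong refl) (auto simp: X_def Y_def Z_def L_def Q_def count_below)
  also have "\<dots> = (\<Sum>z\<in>Z. of_nat (card (Y z)) * gb Q j i)" by simp
  also have "\<dots> = (\<Sum>z\<in>Z. gb Q k j * gb Q j i)"
    by (intro sum.cong refl) (auto simp: Y_def Z_def L_def Q_def count_below)
  also have "\<dots> = of_nat (card Z) * (gb Q k j * gb Q j i)" by simp
  also have "of_nat (card Z) = gb Q n k"
  proof -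
    have "Z = {z \<in> L. z \<subseteq> Fn n \<and> sdim z = k}" by (simp add: Z_def)
    thus ?thesis using count_below[where 'a='a, OF Fn_L, of n k] sdim_Fn[where 'a='a] by (simp add: L_def Q_def)
  qed
  finally have F: "(of_nat (card (SIGMA z:Z. SIGMA y:Y z. X y)) :: rat) = gb Q n k * gb Q k j * gb Q j i"
    by (simp add: ac_simps)
  have "card {c. c \<in> chains3 L (\<subseteq>) \<and> (case c of (x, y, z) \<Rightarrow> (sdim x, sdim y, sdim z)) = (i, j, k)}
      = card (SIGMA z:Z. SIGMA y:Y z. X y)" unfolding eq by (rule card_image[OF inj])
  thus ?thesis using F unfolding L_def Q_def by simp
qed

lemma multinom_eq:
  assumes q: "2 \<le> q" and ijk: "i \<le> j" "j \<le> k" "k \<le> n"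
  shows "gb q n k * gb q k j * gb q j i = qmultinom q n [i, j - i, k - j, n - k]"
proof -
  obtain b where j: "j = i + b" using ijk by (metis le_add_diff_inverse)
  obtain c where k: "k = i + b + c" using ijk j by (metis le_add_diff_inverse)
  obtain d where n: "n = i + b + c + d" using ijk k by (metis le_add_diff_inverse)
  have nz: "qf q i \<noteq> 0" "qf q b \<noteq> 0" "qf q c \<noteq> 0" "qf q d \<noteq> 0" "qf q (i + b) \<noteq> 0"
    "qf q (i + b + c) \<noteq> 0" "qf q (b + c + d) \<noteq> 0" "qf q (c + d) \<noteq> 0" "qf q (i + b + c + d) \<noteq> 0"
    using qf_nz[OF q] by auto
  have e: "i + b + c + d - (i + b + c) = d" "i + b + c - (i + b) = c" "i + b - i = b"
    "i + b + c + d - i = b + c + d" "b + c + d - b = c + d" "c + d - c = d" "d - d = 0" by auto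
  show ?thesis unfolding j k n
    by (simp add: gb_def qbinom_qf e) (use nz in \<open>simp add: field_simps\<close>)
qed

lemma of_nat_monom: "(of_nat N :: rat poly) * monom c e = monom (of_nat N * c) e"
  by (induction N) (simp_all add: algebra_simps add_monom)



lemma tt_prod:
  assumes "i \<le> j" "j \<le> k"
  shows "tt q (j - i) * tt q (k - j) = (-1) ^ (k - i) * of_nat q ^ ((j - i choose 2) + (k - j choose 2))"
proof -
  have "k - i = (j - i) + (k - j)" using assms by simp
  thus ?thesis by (simp add: tt_def power_add algebra_simps)
qed

theorem proposition6p12:
  fixes n :: nat
  defines "q \<equiv> card (UNIV :: 'a set)"
  shows "Mpoly (subspace_lattice n :: (nat \<Rightarrow> 'a::{finite,field}) set set) (\<subseteq>) sdim =
    (\<Sum>(i, j, k) \<in> {(i, j, k). i \<le> j \<and> j \<le> k \<and> k \<le> n}.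
       monom ((-1) ^ (k - i) * qmultinom q n [i, j - i, k - j, n - k]
              * of_nat q ^ (((j - i) choose 2) + ((k - j) choose 2)))
             (3 * n - i - j - k))"
proof -
  define L where "L = (subspace_lattice n :: (nat \<Rightarrow> 'a) set set)"
  define ch where "ch = chains3 L (\<subseteq>)"
  define h where "h = (\<lambda>c :: (nat \<Rightarrow> 'a) set \<times> (nat \<Rightarrow> 'a) set \<times> (nat \<Rightarrow> 'a) set.
     case c of (x, y, z) \<Rightarrow> (sdim x, sdim y, sdim z))"
  define Fm where "Fm = (\<lambda>(i, j, k). monom ((-1) ^ (k - i) * (of_nat q :: rat) ^ ((j - i choose 2) + (k - j choose 2))) (3 * n - i - j - k))"
  define T where "T = {(i, j, k). i \<le> j \<and> j \<le> k \<and> k \<le> (n::nat)}"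
  have q2: "2 \<le> q" unfolding q_def by (rule card_field_ge2)
  have finch: "finite ch" unfolding ch_def chains3_def
    by (rule finite_subset[of _ "L \<times> L \<times> L"]) (use finite_L[where 'a='a] in \<open>auto simp: L_def\<close>)
  have finT: "finite T" unfolding T_def
    by (rule finite_subset[of _ "{..n} \<times> {..n} \<times> {..n}"]) auto
  have step1: "Mpoly L (\<subseteq>) sdim = (\<Sum>c\<in>ch. Fm (h c))"
    unfolding Mpoly_def ch_def
  proof (rule sum.cong[OF refl])
    fix c assume c: "c \<in> chains3 L (\<subseteq>)"
    obtain x y z where cxyz: "c = (x, y, z)" by (cases c)
    have x: "x \<in> L" and y: "y \<in> L" and z: "z \<in> L" and xy: "x \<subseteq> y" and yz: "y \<subseteq> z"
      using c cxyz by (auto simp: chains3_def)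
    have le: "sdim x \<le> sdim y" "sdim y \<le> sdim z"
      using sdim_mono[of x n y] sdim_mono[of y n z] x y z xy yz by (auto simp: L_def)
    have J: "Jfun L (\<subseteq>) x y z = mu q (sdim y - sdim x) * mu q (sdim z - sdim y)"
      using c cxyz unfolding L_def Jfun_eq by (simp add: J0_def q_def)
    have "(of_int (Jfun L (\<subseteq>) x y z) :: rat) = (-1) ^ (sdim z - sdim x) * (of_nat q :: rat) ^ ((sdim y - sdim x choose 2) + (sdim z - sdim y choose 2))"
      unfolding J using tt_prod[OF le, of q] by (simp add: of_int_mu)
    moreover have "rho L sdim x y z = 3 * n - sdim x - sdim y - sdim z"
      by (simp add: rho_def L_def poset_rank_L)
    ultimately show "(case c of (x, y, z) \<Rightarrow> monom (of_int (Jfun L (\<subseteq>) x y z)) (rho L sdim x y z)) = Fm (h c)"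
      by (simp add: cxyz Fm_def h_def)
  qed
  have img: "h ` ch \<subseteq> T"
  proof
    fix t assume "t \<in> h ` ch"
    then obtain x y z where c: "(x, y, z) \<in> ch" and t: "t = (sdim x, sdim y, sdim z)"
      by (auto simp: h_def)
    have x: "x \<in> L" and y: "y \<in> L" and z: "z \<in> L" and xy: "x \<subseteq> y" and yz: "y \<subseteq> z"
      using c by (auto simp: chains3_def ch_def)
    have "sdim x \<le> sdim y" "sdim y \<le> sdim z" "sdim z \<le> n"
      using sdim_mono[of x n y] sdim_mono[of y n z] sdim_le_n[of z n] x y z xy yz by (auto simp: L_def)
    thus "t \<in> T" using t by (simp add: T_def)
  qed
  have "(\<Sum>c\<in>ch. Fm (h c)) = (\<Sum>t\<in>T. \<Sum>c\<in>{c. c \<in> ch \<and> h c = t}. Fm (h c))"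
    by (rule sum.group[OF finch finT img, symmetric])
  also have "\<dots> = (\<Sum>t\<in>T. of_nat (card {c. c \<in> ch \<and> h c = t}) * Fm t)"
  proof (rule sum.cong[OF refl])
    fix t assume "t \<in> T"
    have "(\<Sum>c\<in>{c. c \<in> ch \<and> h c = t}. Fm (h c)) = (\<Sum>c\<in>{c. c \<in> ch \<and> h c = t}. Fm t)"
      by (rule sum.cong) auto
    also have "\<dots> = of_nat (card {c. c \<in> ch \<and> h c = t}) * Fm t" by simp
    finally show "(\<Sum>c\<in>{c. c \<in> ch \<and> h c = t}. Fm (h c)) = of_nat (card {c. c \<in> ch \<and> h c = t}) * Fm t" .
  qed
  also have "\<dots> = (\<Sum>(i, j, k) \<in> T.
       monom ((-1) ^ (k - i) * qmultinom q n [i, j - i, k - j, n - k]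
              * of_nat q ^ (((j - i) choose 2) + ((k - j) choose 2)))
             (3 * n - i - j - k))"
  proof (rule sum.cong[OF refl])
    fix t assume tT: "t \<in> T"
    obtain i j k where t: "t = (i, j, k)" by (cases t)
    have ijk: "i \<le> j" "j \<le> k" "k \<le> n" using tT t by (auto simp: T_def)
    have "(of_nat (card {c. c \<in> ch \<and> h c = t}) :: rat) = qmultinom q n [i, j - i, k - j, n - k]"
      using count_chains[OF ijk, where 'a='a] multinom_eq[OF q2 ijk]
      by (simp add: t ch_def h_def L_def q_def)
    thus "of_nat (card {c. c \<in> ch \<and> h c = t}) * Fm t = (case t of (i, j, k) \<Rightarrow>
       monom ((-1) ^ (k - i) * qmultinom q n [i, j - i, k - j, n - k]
              * of_nat q ^ (((j - i) choose 2) + ((k - j) choose 2)))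
             (3 * n - i - j - k))"
      by (simp add: t Fm_def of_nat_monom ac_simps)
  qed
  finally show ?thesis using step1 unfolding L_def T_def by simp
qed

end
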